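(* For every $M>0$ there exist a Stackelberg game $(G,L,F)$ and an SCE-PA $\mathbf{x}=[x_\pi]\in\mathbf{X}^{SCE\text{-}PA}$ such that $\max_{y\in\mathcal{X}^{CE}}\sum_{p\in L}u_p(y)>0$ and both $\sum_{p\in L}u_p(x_\varnothing)-\max_{y\in\mathcal{X}^{CE}}\sum_{p\in L}u_p(y)\ge M$ and $\sum_{p\in L}u_p(x_\varnothing)\ge M\cdot\max_{y\in\mathcal{X}^{CE}}\sum_{p\in L}u_p(y)$.
   Context: A finite game is $G=(N,\{S_p\}_{p\in N},\{u_p\}_{p\in N})$ with players $N=\{1,\dots,n\}$, finite nonempty strategy sets $S_p$, and utilities $u_p:S\to\mathbb{R}$ on $S=\prod_{p\in N}S_p$; write $s=(s_p,s_{-p})$ with $s_{-p}\in S_{-p}=\prod_{q\neq p}S_q$. $\mathcal{X}=\Delta(S)$ is the set of probability distributions on $S$ and $u_p(x)=\sum_{s\in S}x(s)u_p(s)$ for $x\in\mathcal{X}$. For $P\subseteq N$, $\mathcal{X}^{CE}_P$ is the set of $x\in\mathcal{X}$ such that for every $p\in P$ and all $s_p\neq s_p'\in S_p$: $\sum_{s_{-p}\in S_{-p}} x(s_p,s_{-p})\,(u_p(s_p,s_{-p})-u_p(s_p',s_{-p}))\ge 0$; $\mathcal{X}^{CE}=\mathcal{X}^{CE}_N$ is the set of correlated equilibria of $G$. A Stackelberg game (SG) is a triple $(G,L,F)$ with $L\cup F=N$ and $L\cap F=\emptyset$ (leaders and followers). For $P\subseteq N$, $\Pi_P$ is the set of ordered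 subsets of $P$ (finite sequences of pairwise distinct elements of $P$, including the empty sequence $\varnothing$); for $\pi\in\Pi_P$ and $p\in P$ not occurring in $\pi$, $\pi p$ is $\pi$ with $p$ appended; when used as a set, $\pi$ means its set of entries. $\mathbf{X}=\prod_{\pi\in\Pi_L}\mathcal{X}^{CE}_{\pi\cup F}$, with elements $\mathbf{x}=[x_\pi]_{\pi\in\Pi_L}$. For $\mathbf{x}\in\mathbf{X}$ and $\pi\in\Pi_L$, $x_\pi$ is stable if $u_p(x_\pi)\ge u_p(x_{\pi p})$ for all $p\in L\setminus\pi$; $\mathbf{x}$ is stable if $x_\varnothing$ is stable, and perfectly stable if $x_\pi$ is stable for every $\pi\in\Pi_L$; $\mathbf{X}^{S}$ and $\mathbf{X}^{PS}$ denote the sets of stable and perfectly stable elements of $\mathbf{X}$. For $\mathbf{X}'\subseteq\mathbf{X}$ and $\pi\in\Pi_L$, $\mathcal{P}_{L\setminus\pi}(\mathbf{X}')$ is the set of Pareto optimal elements of $\{x'_\pi:\mathbf{x}'\in\mathbf{X}'\}$ with respect to the objectives $u_p$, $p\in L\setminus\pi$ (an element $y$ of the set is Pareto optimal if no $y'$ in the set satisfies $u_p(y')\ge u_p(y)$ for all $p\in L\setminus\pi$ with strict inequality for some such $p$). $\mathbf{x}\in\mathbf{X}$ is an SCE-PA if $\mathbf{x}\in\mathbf{X}^{PS}$ and $x_\varnothing\in\mathcal{P}_L(\mathbf{X}^{PS})$; $\mathbf{X}^{SCE\text{-}PA}$ is the set of SCE-PAs. *)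

theory Defs
  imports Complex_Main "HOL-Library.FuncSet"
begin

text \<open>A distribution on profiles is a nonnegative function summing to 1
over the (finite) set of profiles; its values off the profiles are irrelevant.\<close>

type_synonym profile = "nat \<Rightarrow> nat"
type_synonym distr = "profile \<Rightarrow> real"

definition profiles :: "nat set \<Rightarrow> (nat \<Rightarrow> nat set) \<Rightarrow> profile set" where
  "profiles N S = PiE N S"

definition finite_game :: "nat set \<Rightarrow> (nat \<Rightarrow> nat set) \<Rightarrow> bool" where
  "finite_game N S \<longleftrightarrow> (\<exists>n\<ge>1. N = {1..n}) \<and> (\<forall>p\<in>N. finite (S p) \<and> S p \<noteq> {})"

definition is_distr :: "nat set \<Rightarrow> (nat \<Rightarrow> nat set) \<Rightarrow> distr \<Rightarrow> bool" where
  "is_distr N S x \<longleftrightarrow> (\<forall>s\<in>profiles N S. x s \<ge> 0) \<and> (\<Sum>s\<in>profiles N S. x s) = 1"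

definition util :: "nat set \<Rightarrow> (nat \<Rightarrow> nat set) \<Rightarrow> (nat \<Rightarrow> profile \<Rightarrow> real) \<Rightarrow> nat \<Rightarrow> distr \<Rightarrow> real" where
  "util N S u p x = (\<Sum>s\<in>profiles N S. x s * u p s)"

text \<open>The constraint sum over s_{-p} is written as a sum over profiles s with s p = a;
the deviation profile (a',s_{-p}) is s(p := a').\<close>
definition CE_set :: "nat set \<Rightarrow> (nat \<Rightarrow> nat set) \<Rightarrow> (nat \<Rightarrow> profile \<Rightarrow> real) \<Rightarrow> nat set \<Rightarrow> distr set" where
  "CE_set N S u P = {x. is_distr N S x \<and>
     (\<forall>p\<in>P. \<forall>a\<in>S p. \<forall>b\<in>S p. a \<noteq> b \<longrightarrow>
        (\<Sum>s\<in>{s\<in>profiles N S. s p = a}. x s * (u p s - u p (s(p := b)))) \<ge> 0)}"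

definition stackelberg :: "nat set \<Rightarrow> nat set \<Rightarrow> nat set \<Rightarrow> bool" where
  "stackelberg N L F \<longleftrightarrow> L \<union> F = N \<and> L \<inter> F = {}"

definition ordered_subsets :: "nat set \<Rightarrow> nat list set" where
  "ordered_subsets P = {\<pi>. distinct \<pi> \<and> set \<pi> \<subseteq> P}"

text \<open>An element of bold X is a map from ordered subsets of L to distributions
(values at other lists are irrelevant).\<close>
definition XX :: "nat set \<Rightarrow> (nat \<Rightarrow> nat set) \<Rightarrow> (nat \<Rightarrow> profile \<Rightarrow> real) \<Rightarrow> nat set \<Rightarrow> nat set
    \<Rightarrow> (nat list \<Rightarrow> distr) set" where
  "XX N S u L F = {xs. \<forall>\<pi>\<in>ordered_subsets L. xs \<pi> \<in> CE_set N S u (set \<pi> \<union> F)}"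

definition stable_at :: "nat set \<Rightarrow> (nat \<Rightarrow> nat set) \<Rightarrow> (nat \<Rightarrow> profile \<Rightarrow> real) \<Rightarrow> nat set
    \<Rightarrow> (nat list \<Rightarrow> distr) \<Rightarrow> nat list \<Rightarrow> bool" where
  "stable_at N S u L xs \<pi> \<longleftrightarrow> (\<forall>p\<in>L - set \<pi>. util N S u p (xs \<pi>) \<ge> util N S u p (xs (\<pi> @ [p])))"

definition XX_PS :: "nat set \<Rightarrow> (nat \<Rightarrow> nat set) \<Rightarrow> (nat \<Rightarrow> profile \<Rightarrow> real) \<Rightarrow> nat set \<Rightarrow> nat set
    \<Rightarrow> (nat list \<Rightarrow> distr) set" where
  "XX_PS N S u L F = {xs \<in> XX N S u L F. \<forall>\<pi>\<in>ordered_subsets L. stable_at N S u L xs \<pi>}"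

definition pareto_opt :: "nat set \<Rightarrow> (nat \<Rightarrow> nat set) \<Rightarrow> (nat \<Rightarrow> profile \<Rightarrow> real) \<Rightarrow> nat set
    \<Rightarrow> distr set \<Rightarrow> distr \<Rightarrow> bool" where
  "pareto_opt N S u Obj A y \<longleftrightarrow> y \<in> A \<and>
     \<not> (\<exists>y'\<in>A. (\<forall>p\<in>Obj. util N S u p y' \<ge> util N S u p y) \<and> (\<exists>p\<in>Obj. util N S u p y' > util N S u p y))"

definition SCE_PA :: "nat set \<Rightarrow> (nat \<Rightarrow> nat set) \<Rightarrow> (nat \<Rightarrow> profile \<Rightarrow> real) \<Rightarrow> nat set \<Rightarrow> nat set
    \<Rightarrow> (nat list \<Rightarrow> distr) set" where
  "SCE_PA N S u L F = {xs \<in> XX_PS N S u L F.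
     pareto_opt N S u L ((\<lambda>x'. x' []) ` XX_PS N S u L F) (xs [])}"

definition leader_welfare :: "nat set \<Rightarrow> (nat \<Rightarrow> nat set) \<Rightarrow> (nat \<Rightarrow> profile \<Rightarrow> real) \<Rightarrow> nat set \<Rightarrow> distr \<Rightarrow> real" where
  "leader_welfare N S u L x = (\<Sum>p\<in>L. util N S u p x)"

definition is_max_CE_welfare :: "nat set \<Rightarrow> (nat \<Rightarrow> nat set) \<Rightarrow> (nat \<Rightarrow> profile \<Rightarrow> real) \<Rightarrow> nat set \<Rightarrow> real \<Rightarrow> bool" where
  "is_max_CE_welfare N S u L m \<longleftrightarrow>
     (\<exists>y\<in>CE_set N S u N. leader_welfare N S u L y = m) \<and>
     (\<forall>y\<in>CE_set N S u N. leader_welfare N S u L y \<le> m)"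

end

theory Submission
  imports Defs
begin

definition uPD :: "real \<Rightarrow> nat \<Rightarrow> profile \<Rightarrow> real" where
  "uPD A p s = (if p = 1 then
      (if s 1 = 0 \<and> s 2 = 0 then A else if s 1 = 0 then -1 else if s 2 = 0 then A + 1 else 1)
    else
      (if s 1 = 0 \<and> s 2 = 0 then A else if s 2 = 0 then -1 else if s 1 = 0 then A + 1 else 1))"

definition NN :: "nat set" where "NN = {1,2}"
definition SS :: "nat \<Rightarrow> nat set" where "SS = (\<lambda>_. {0,1})"
definition pt :: "nat \<Rightarrow> profile" where "pt v = (\<lambda>i. if i \<in> {1,2} then v else undefined)"
definition dirac :: "profile \<Rightarrow> distr" where "dirac t = (\<lambda>s. if s = t then 1 else 0)"

lemma pt_in: "v \<in> {0,1} \<Longrightarrow> pt v \<in> profiles NN SS"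
  by (auto simp: profiles_def NN_def SS_def pt_def PiE_iff extensional_def)

lemma fin_prof: "finite (profiles NN SS)"
  by (simp add: profiles_def NN_def SS_def finite_PiE)

lemma dirac_distr: "t \<in> profiles NN SS \<Longrightarrow> is_distr NN SS (dirac t)"
  using fin_prof by (simp add: is_distr_def dirac_def)

lemma sum_dirac: "finite X \<Longrightarrow> (\<Sum>s\<in>X. dirac t s * f s) = (if t \<in> X then f t else 0)"
proof -
  assume "finite X"
  have "(\<Sum>s\<in>X. dirac t s * f s) = (\<Sum>s\<in>X. if s = t then f s else 0)"
    by (rule sum.cong) (auto simp: dirac_def)
  also have "\<dots> = (if t \<in> X then f t else 0)" using \<open>finite X\<close> by (simp add: sum.delta')
  finally show ?thesis .
qed

lemma util_dirac: "t \<in> profiles NN SS \<Longrightarrow> util NN SS u p (dirac t) = u p t"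
  using fin_prof by (simp add: util_def sum_dirac)

lemma dd_CE: "dirac (pt 1) \<in> CE_set NN SS (uPD A) P"
  if "P \<subseteq> NN" for A P
proof -
  have d: "is_distr NN SS (dirac (pt 1))" by (rule dirac_distr) (simp add: pt_in)
  have "(\<Sum>s\<in>{s\<in>profiles NN SS. s p = a}. dirac (pt 1) s * (uPD A p s - uPD A p (s(p := b)))) \<ge> 0"
    if "p \<in> P" "a \<in> SS p" "b \<in> SS p" "a \<noteq> b" for p a b
  proof -
    have fin: "finite {s\<in>profiles NN SS. s p = a}" using fin_prof by simp
    have "(\<Sum>s\<in>{s\<in>profiles NN SS. s p = a}. dirac (pt 1) s * (uPD A p s - uPD A p (s(p := b))))
      = (if pt 1 \<in> {s\<in>profiles NN SS. s p = a} then uPD A p (pt 1) - uPD A p ((pt 1)(p := b)) else 0)"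
      using fin by (rule sum_dirac)
    also have "\<dots> \<ge> 0"
      using that \<open>P \<subseteq> NN\<close> by (auto simp: uPD_def pt_def NN_def SS_def)
    finally show ?thesis .
  qed
  with d show ?thesis by (auto simp: CE_set_def)
qed

lemma os: "ordered_subsets {1,2} \<subseteq> {[], [1], [2], [1,2], [2,1]}"
proof
  fix l assume "l \<in> ordered_subsets {1::nat,2}"
  hence d: "distinct l" "set l \<subseteq> {1,2}" by (auto simp: ordered_subsets_def)
  have "length l \<le> 2" using distinct_card[OF d(1)] card_mono[OF _ d(2)] by fastforce
  then consider "l = []" | x where "l = [x]" | x y where "l = [x,y]"
    by (cases l; cases "tl l"; auto)
  thus "l \<in> {[], [1], [2], [1,2], [2,1]}" using d by cases auto
qed

theorem mainTheorem18:
  fixes M :: real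
  assumes "M > 0"
  shows "\<exists>N S u L F xs m. finite_game N S \<and> stackelberg N L F \<and> xs \<in> SCE_PA N S u L F \<and>
           is_max_CE_welfare N S u L m \<and> m > 0 \<and>
           leader_welfare N S u L (xs []) - m \<ge> M \<and>
           leader_welfare N S u L (xs []) \<ge> M * m"
proof -
  define A where "A = M + 1"
  have A1: "A \<ge> 1" using assms by (simp add: A_def)
  define u where "u = uPD A"
  define xs where "xs = (\<lambda>\<pi>::nat list. if \<pi> = [] then dirac (pt 0) else dirac (pt 1))"
  have cc: "pt 0 \<in> profiles NN SS" and dd: "pt 1 \<in> profiles NN SS" by (simp_all add: pt_in)
  have fg: "finite_game NN SS"
    unfolding finite_game_def NN_def SS_def by (rule conjI, rule exI[of _ 2]) auto
  have sg: "stackelberg NN NN {}" by (simp add: stackelberg_def)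
  have uc: "util NN SS u p (xs []) = A" if "p \<in> NN" for p
    using that unfolding xs_def by (simp add: util_dirac[OF cc]) (auto simp: u_def uPD_def pt_def NN_def)
  have ud: "util NN SS u p (xs \<pi>) = 1" if "p \<in> NN" "\<pi> \<noteq> []" for p \<pi>
  proof -
    have "xs \<pi> = dirac (pt 1)" using that by (simp add: xs_def)
    hence "util NN SS u p (xs \<pi>) = u p (pt 1)" using util_dirac[OF dd] by simp
    thus ?thesis using that by (auto simp: u_def uPD_def pt_def NN_def)
  qed
  have inXX: "xs \<in> XX NN SS u NN {}"
    unfolding XX_def
  proof (intro CollectI ballI)
    fix \<pi> assume "\<pi> \<in> ordered_subsets NN"
    hence sub: "set \<pi> \<union> {} \<subseteq> NN" by (simp add: ordered_subsets_def)
    show "xs \<pi> \<in> CE_set NN SS u (set \<pi> \<union> {})"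
    proof (cases "\<pi> = []")
      case True thus ?thesis using dirac_distr[OF cc] by (simp add: xs_def CE_set_def)
    next
      case False thus ?thesis using dd_CE[OF sub] by (simp add: xs_def u_def)
    qed
  qed
  have inPS: "xs \<in> XX_PS NN SS u NN {}"
    unfolding XX_PS_def
  proof (intro CollectI conjI ballI inXX)
    fix \<pi> assume "\<pi> \<in> ordered_subsets NN"
    show "stable_at NN SS u NN xs \<pi>"
      unfolding stable_at_def
    proof
      fix p assume p: "p \<in> NN - set \<pi>"
      show "util NN SS u p (xs \<pi>) \<ge> util NN SS u p (xs (\<pi> @ [p]))"
      proof (cases "\<pi> = []")
        case True thus ?thesis using p uc ud A1 by simp
      next
        case False thus ?thesis using p ud by simp
      qed
    qed
  qed
  have sum_bound: "util NN SS u 1 y + util NN SS u 2 y \<le> 2 * A" if "is_distr NN SS y" for y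
  proof -
    have "util NN SS u 1 y + util NN SS u 2 y = (\<Sum>s\<in>profiles NN SS. y s * (u 1 s + u 2 s))"
      by (simp add: util_def sum.distrib[symmetric] algebra_simps)
    also have "\<dots> \<le> (\<Sum>s\<in>profiles NN SS. y s * (2 * A))"
    proof (rule sum_mono)
      fix s assume "s \<in> profiles NN SS"
      hence y0: "y s \<ge> 0" using that by (simp add: is_distr_def)
      have "u 1 s + u 2 s \<le> 2 * A" using A1 by (simp add: u_def uPD_def)
      from mult_left_mono[OF this y0] show "y s * (u 1 s + u 2 s) \<le> y s * (2 * A)" .
    qed
    also have "\<dots> = 2 * A" using that by (simp add: is_distr_def sum_distrib_right[symmetric])
    finally show ?thesis .
  qed
  have lw: "leader_welfare NN SS u NN y = util NN SS u 1 y + util NN SS u 2 y" for y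
    by (simp add: leader_welfare_def NN_def)
  have po: "pareto_opt NN SS u NN ((\<lambda>x'. x' []) ` XX_PS NN SS u NN {}) (xs [])"
    unfolding pareto_opt_def
  proof (intro conjI)
    show "xs [] \<in> (\<lambda>x'. x' []) ` XX_PS NN SS u NN {}" using inPS by blast
    show "\<not> (\<exists>y'\<in>(\<lambda>x'. x' []) ` XX_PS NN SS u NN {}. (\<forall>p\<in>NN. util NN SS u p y' \<ge> util NN SS u p (xs [])) \<and>
        (\<exists>p\<in>NN. util NN SS u p y' > util NN SS u p (xs [])))"
    proof
      assume "\<exists>y'\<in>(\<lambda>x'. x' []) ` XX_PS NN SS u NN {}. (\<forall>p\<in>NN. util NN SS u p y' \<ge> util NN SS u p (xs [])) \<and>
        (\<exists>p\<in>NN. util NN SS u p y' > util NN SS u p (xs []))"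
      then obtain x' where x': "x' \<in> XX_PS NN SS u NN {}"
        and ge: "\<forall>p\<in>NN. util NN SS u p (x' []) \<ge> A"
        and gt: "\<exists>p\<in>NN. util NN SS u p (x' []) > A" using uc by auto
      have "[] \<in> ordered_subsets NN" by (simp add: ordered_subsets_def)
      hence "x' [] \<in> CE_set NN SS u ({})" using x' by (auto simp: XX_PS_def XX_def)
      hence "is_distr NN SS (x' [])" by (simp add: CE_set_def)
      from sum_bound[OF this] ge gt show False by (auto simp: NN_def)
    qed
  qed
  have ce_w: "leader_welfare NN SS u NN y = 2" if y: "y \<in> CE_set NN SS u NN" for y
  proof -
    have dy: "is_distr NN SS y" using y by (simp add: CE_set_def)
    have zero: "y s = 0" if s: "s \<in> profiles NN SS" "s p = 0" "p \<in> NN" for s p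
    proof -
      have c: "(\<Sum>s\<in>{s\<in>profiles NN SS. s p = 0}. y s * (u p s - u p (s(p := 1)))) \<ge> 0"
        using y s(3) by (auto simp: CE_set_def SS_def)
      have neg: "u p t - u p (t(p := 1)) \<le> -1" if "t p = 0" for t
      proof -
        have "p = 1 \<or> p = 2" using s(3) by (simp add: NN_def)
        moreover have "u 1 t - u 1 (t(1 := 1)) \<le> -1" if "t 1 = 0"
          using that A1 unfolding u_def uPD_def by simp
        moreover have "u 2 t - u 2 (t(2 := 1)) \<le> -1" if "t 2 = 0"
          using that A1 unfolding u_def uPD_def by simp
        ultimately show ?thesis using \<open>t p = 0\<close> by auto
      qed
      have fin: "finite {s\<in>profiles NN SS. s p = 0}" using fin_prof by simp
      have nn: "\<forall>t\<in>{s\<in>profiles NN SS. s p = 0}. 0 \<le> - (y t * (u p t - u p (t(p := 1))))"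
      proof
        fix t assume t: "t \<in> {s\<in>profiles NN SS. s p = 0}"
        hence "y t \<ge> 0" using dy by (simp add: is_distr_def)
        moreover have "u p t - u p (t(p := 1)) \<le> 0"
        proof -
          have "t p = 0" using t by simp
          from neg[of t, OF this] show ?thesis by simp
        qed
        ultimately show "0 \<le> - (y t * (u p t - u p (t(p := 1))))"
          by (simp add: mult_nonneg_nonpos)
      qed
      have "(\<Sum>t\<in>{s\<in>profiles NN SS. s p = 0}. - (y t * (u p t - u p (t(p := 1))))) = 0"
      proof -
        have "(\<Sum>t\<in>{s\<in>profiles NN SS. s p = 0}. - (y t * (u p t - u p (t(p := 1))))) \<ge> 0"
          using nn by (intro sum_nonneg) blast
        moreover have "(\<Sum>t\<in>{s\<in>profiles NN SS. s p = 0}. - (y t * (u p t - u p (t(p := 1)))))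
           = - (\<Sum>t\<in>{s\<in>profiles NN SS. s p = 0}. (y t * (u p t - u p (t(p := 1)))))"
          by (rule sum_negf)
        ultimately show ?thesis using c by linarith
      qed
      moreover have "(\<Sum>t\<in>{s\<in>profiles NN SS. s p = 0}. - (y t * (u p t - u p (t(p := 1))))) = 0
         \<longleftrightarrow> (\<forall>t\<in>{s\<in>profiles NN SS. s p = 0}. - (y t * (u p t - u p (t(p := 1)))) = 0)"
        by (rule sum_nonneg_eq_0_iff[OF fin]) (rule nn[rule_format])
      ultimately have "\<forall>t\<in>{s\<in>profiles NN SS. s p = 0}. - (y t * (u p t - u p (t(p := 1)))) = 0"
        by (rule iffD1[rotated])
      hence "y s * (u p s - u p (s(p := 1))) = 0" using s by auto
      moreover have "u p s - u p (s(p := 1)) \<le> -1" using neg[of s, OF s(2)] .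
      ultimately show ?thesis by auto
    qed
    have "leader_welfare NN SS u NN y = (\<Sum>s\<in>profiles NN SS. y s * (u 1 s + u 2 s))"
      by (simp add: lw util_def sum.distrib[symmetric] algebra_simps)
    also have "\<dots> = (\<Sum>s\<in>profiles NN SS. y s * 2)"
    proof (rule sum.cong)
      fix s assume s: "s \<in> profiles NN SS"
      hence v: "s 1 \<in> {0,1}" "s 2 \<in> {0,1}" by (auto simp: profiles_def NN_def SS_def PiE_iff)
      show "y s * (u 1 s + u 2 s) = y s * 2"
      proof (cases "s 1 = 0 \<or> s 2 = 0")
        case True thus ?thesis using zero[OF s, of 1] zero[OF s, of 2] by (auto simp: NN_def)
      next
        case False hence "s 1 = 1" "s 2 = 1" using v by auto
        thus ?thesis by (simp add: u_def uPD_def)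
      qed
    qed simp
    also have "\<dots> = 2" using dy by (simp add: is_distr_def sum_distrib_right[symmetric])
    finally show ?thesis .
  qed
  have mx: "is_max_CE_welfare NN SS u NN 2"
    unfolding is_max_CE_welfare_def
  proof (intro conjI ballI)
    have "dirac (pt 1) \<in> CE_set NN SS u NN" using dd_CE[of NN A] by (simp add: u_def)
    thus "\<exists>y\<in>CE_set NN SS u NN. leader_welfare NN SS u NN y = 2" using ce_w by blast
  next
    fix y assume "y \<in> CE_set NN SS u NN" thus "leader_welfare NN SS u NN y \<le> 2" using ce_w by simp
  qed
  have w: "leader_welfare NN SS u NN (xs []) = 2 * A"
    using uc[of 1] uc[of 2] unfolding lw by (simp add: NN_def)
  have sce: "xs \<in> SCE_PA NN SS u NN {}" using inPS po by (simp add: SCE_PA_def)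
  show ?thesis
    apply (rule exI[of _ NN], rule exI[of _ SS], rule exI[of _ u], rule exI[of _ NN],
           rule exI[of _ "{}"], rule exI[of _ xs], rule exI[of _ 2])
    using fg sg sce mx w assms by (simp add: A_def)
qed

end
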